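(* Let $n\geq 3$ and let $C_n^*$ be the bigraded complex described in the context. Let $D$ be a bigraded $S^3$-knotlike chain complex over $R$ and let $f\colon C_n^*\to D$ be a local map. Then there does not exist a local map $g\colon D\to C_n^*$ such that $g\circ f$ is homogeneous of bigrading $(c_1,c_2)$ with $c_1>-2n+2$ and $c_2>-2n$.
   Context: Let $\mathbb{F}=\mathbb{Z}/2$ and $R=\mathbb{F}[\mathcal{U},\mathcal{V}]$, bigraded by $(\operatorname{gr}_{\mathcal{U}},\operatorname{gr}_{\mathcal{V}})$ with $\mathcal{U}$ of bigrading $(-2,0)$ and $\mathcal{V}$ of bigrading $(0,-2)$; complexes have differentials of bigrading $(-1,-1)$. A local map between complexes over $R$ is an $R$-linear homogeneous chain map inducing an isomorphism on homology after localizing at $\mathcal{U}$ and $\mathcal{V}$ (i.e. after tensoring with $\mathbb{F}[\mathcal{U},\mathcal{V},\mathcal{U}^{-1},\mathcal{V}^{-1}]$). A map is homogeneous of bigrading $(c_1,c_2)$ if it sends elements of bigrading $(a,b)$ to elements of bigrading $(a+c_1,b+c_2)$. A complex $D$ over $R$ is $S^3$-knotlike if $H_*(D\otimes_R\mathbb{F}[\mathcal{U}])\cong\mathbb{F}[\mathcal{U}]$, where $\mathcal{V}$ acts on $\mathbb{F}[\mathcal{U}]$ as $1$. For $n\geq 3$, $C_n^*$ is the free $R$-module with basis $\alpha^*_s$ ($1\leq s\leq 2n-1$); $\widetilde{\alpha}^*_s$ ($1\leq s\leq n-2$ and $n+1\leq s\leq 2n-2$); $b^{*,(s)}_{n-1}$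 ($1\leq s\leq n-2$); $b^{*,(s)}_{n}$ ($1\leq s\leq 2n-2$); $b^{*,(s)}_{n+1}$ ($n+1\leq s\leq 2n-2$), with $R$-linear differential $\partial$ given by $\partial\alpha^*_s=0$, $\partial\widetilde{\alpha}^*_s=0$, and $\partial b^{*,(s)}_{n-1}=\mathcal{U}^{n(n-1)/2}\mathcal{V}^{n(n-1)/2}\alpha^*_s+\mathcal{V}^{n-s-1}\widetilde{\alpha}^*_s$ for $1\leq s\leq n-2$; $\partial b^{*,(s)}_{n}=\mathcal{U}^{n(n+1)/2-s}\mathcal{V}^{n(n+1)/2}\alpha^*_{s+1}+\mathcal{U}^{n}\widetilde{\alpha}^*_s$ for $1\leq s\leq n-2$; $\partial b^{*,(s)}_{n}=\mathcal{U}^{n(n+1)/2}\mathcal{V}^{n(n-1)/2-n+s+1}\alpha^*_s+\mathcal{U}^{n(n+1)/2-s}\mathcal{V}^{n(n+1)/2}\alpha^*_{s+1}$ for $n-1\leq s\leq n$; $\partial b^{*,(s)}_{n}=\mathcal{U}^{n(n+1)/2}\mathcal{V}^{n(n-1)/2-n+s+1}\alpha^*_s+\mathcal{V}^{n}\widetilde{\alpha}^*_s$ for $n+1\leq s\leq 2n-2$; $\partial b^{*,(s)}_{n+1}=\mathcal{U}^{n(n-1)/2}\mathcal{V}^{n(n-1)/2}\alpha^*_{s+1}+\mathcal{U}^{s-n}\widetilde{\alpha}^*_s$ for $n+1\leq s\leq 2n-2$. The basis elements are assigned bigradings so that $\partial$ is homogeneous of bigrading $(-1,-1)$ (unique up to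 an overall shift; any such choice is fixed). *)

theory Defs
  imports "HOL-Library.Z2" "HOL-Computational_Algebra.Polynomial"
    "HOL-Computational_Algebra.Fraction_Field"
begin

text \<open>R = (F[U])[V]: the outer polynomial variable is V, the inner one is U.\<close>
type_synonym R = "bit poly poly"

definition mono :: "nat \<Rightarrow> nat \<Rightarrow> R" where
  "mono p q = monom (monom 1 p) q"

definition hom_elt :: "R \<Rightarrow> int \<Rightarrow> int \<Rightarrow> bool" where
  "hom_elt r a b \<longleftrightarrow>
     (\<forall>p q. coeff (coeff r q) p \<noteq> 0 \<longrightarrow> a = - 2 * int p \<and> b = - 2 * int q)"

text \<open>A complex is given by a finite homogeneous basis (bas), the bigradings of the
  basis elements (grd), and the differential matrix: dmat C i j is the coefficient of
  basis element i in the differential of basis element j.\<close>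
record 'b fcx =
  bas :: "'b set"
  grd :: "'b \<Rightarrow> int \<times> int"
  dmat :: "'b \<Rightarrow> 'b \<Rightarrow> R"

definition is_fcx :: "'b fcx \<Rightarrow> bool" where
  "is_fcx C \<longleftrightarrow> finite (bas C)
    \<and> (\<forall>i j. (i \<notin> bas C \<or> j \<notin> bas C) \<longrightarrow> dmat C i j = 0)
    \<and> (\<forall>i\<in>bas C. \<forall>j\<in>bas C. hom_elt (dmat C i j)
          (fst (grd C j) - 1 - fst (grd C i)) (snd (grd C j) - 1 - snd (grd C i)))
    \<and> (\<forall>i j. (\<Sum>k\<in>bas C. dmat C i k * dmat C k j) = 0)"

text \<open>R-linear maps between free modules are matrices: M i j is the coefficient of
  basis element i of the target in the image of basis element j of the source.\<close>
definition hom_map :: "'a fcx \<Rightarrow> 'b fcx \<Rightarrow> ('b \<Rightarrow> 'a \<Rightarrow> R) \<Rightarrow> int \<Rightarrow> int \<Rightarrow> bool" where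
  "hom_map C D M c1 c2 \<longleftrightarrow>
     (\<forall>i j. (i \<notin> bas D \<or> j \<notin> bas C) \<longrightarrow> M i j = 0)
   \<and> (\<forall>i\<in>bas D. \<forall>j\<in>bas C. hom_elt (M i j)
          (fst (grd C j) + c1 - fst (grd D i)) (snd (grd C j) + c2 - snd (grd D i)))"

definition chain_map :: "'a fcx \<Rightarrow> 'b fcx \<Rightarrow> ('b \<Rightarrow> 'a \<Rightarrow> R) \<Rightarrow> bool" where
  "chain_map C D M \<longleftrightarrow>
     (\<forall>i j. (\<Sum>k\<in>bas D. dmat D i k * M k j) = (\<Sum>k\<in>bas C. M i k * dmat C k j))"

definition mat_comp :: "'b set \<Rightarrow> ('c \<Rightarrow> 'b \<Rightarrow> R) \<Rightarrow> ('b \<Rightarrow> 'a \<Rightarrow> R) \<Rightarrow> 'c \<Rightarrow> 'a \<Rightarrow> R" where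
  "mat_comp B G F = (\<lambda>i j. \<Sum>k\<in>B. G i k * F k j)"

text \<open>The Laurent ring F[U,V,U^-1,V^-1], realised inside the fraction field of R.\<close>
definition Lring :: "R fract set" where
  "Lring = {Fract p (mono a b) | p a b. True}"

definition Lvec :: "'b set \<Rightarrow> ('b \<Rightarrow> R fract) set" where
  "Lvec B = {v. (\<forall>i. i \<notin> B \<longrightarrow> v i = 0) \<and> (\<forall>i. v i \<in> Lring)}"

definition Lapp :: "'a set \<Rightarrow> ('b \<Rightarrow> 'a \<Rightarrow> R) \<Rightarrow> ('a \<Rightarrow> R fract) \<Rightarrow> 'b \<Rightarrow> R fract" where
  "Lapp A M v = (\<lambda>i. \<Sum>k\<in>A. Fract (M i k) 1 * v k)"

text \<open>The chain map M : C \<rightarrow> D induces an isomorphism (injective and surjective map)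
  H_*(C \<otimes> L) \<rightarrow> H_*(D \<otimes> L), L the Laurent ring.\<close>
definition loc_iso :: "'a fcx \<Rightarrow> 'b fcx \<Rightarrow> ('b \<Rightarrow> 'a \<Rightarrow> R) \<Rightarrow> bool" where
  "loc_iso C D M \<longleftrightarrow>
     (\<forall>y\<in>Lvec (bas D). (\<forall>i. Lapp (bas D) (dmat D) y i = 0) \<longrightarrow>
        (\<exists>x\<in>Lvec (bas C). (\<forall>i. Lapp (bas C) (dmat C) x i = 0) \<and>
           (\<exists>w\<in>Lvec (bas D). (\<lambda>i. y i - Lapp (bas C) M x i) = Lapp (bas D) (dmat D) w)))
   \<and> (\<forall>x\<in>Lvec (bas C). (\<forall>i. Lapp (bas C) (dmat C) x i = 0) \<longrightarrow>
        (\<exists>w\<in>Lvec (bas D). Lapp (bas C) M x = Lapp (bas D) (dmat D) w) \<longrightarrow>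
        (\<exists>u\<in>Lvec (bas C). x = Lapp (bas C) (dmat C) u))"

definition local_map :: "'a fcx \<Rightarrow> 'b fcx \<Rightarrow> ('b \<Rightarrow> 'a \<Rightarrow> R) \<Rightarrow> bool" where
  "local_map C D M \<longleftrightarrow> (\<exists>c1 c2. hom_map C D M c1 c2) \<and> chain_map C D M \<and> loc_iso C D M"

text \<open>D \<otimes>_R F[U] with V acting as 1: entries are evaluated at V = 1.\<close>
definition Uvec :: "'b set \<Rightarrow> ('b \<Rightarrow> bit poly) set" where
  "Uvec B = {v. \<forall>i. i \<notin> B \<longrightarrow> v i = 0}"

definition Uapp :: "'a set \<Rightarrow> ('b \<Rightarrow> 'a \<Rightarrow> R) \<Rightarrow> ('a \<Rightarrow> bit poly) \<Rightarrow> 'b \<Rightarrow> bit poly" where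
  "Uapp A M v = (\<lambda>i. \<Sum>k\<in>A. poly (M i k) 1 * v k)"

text \<open>H_*(D \<otimes> F[U]) \<cong> F[U] as F[U]-modules: there is a cycle z such that
  p \<mapsto> [p z] is an isomorphism F[U] \<rightarrow> H_*(D \<otimes> F[U]).\<close>
definition knotlike :: "'b fcx \<Rightarrow> bool" where
  "knotlike D \<longleftrightarrow> (\<exists>z\<in>Uvec (bas D). (\<forall>i. Uapp (bas D) (dmat D) z i = 0)
     \<and> (\<forall>y\<in>Uvec (bas D). (\<forall>i. Uapp (bas D) (dmat D) y i = 0) \<longrightarrow>
          (\<exists>p. \<exists>w\<in>Uvec (bas D). (\<lambda>i. y i - p * z i) = Uapp (bas D) (dmat D) w))
     \<and> (\<forall>p. (\<exists>w\<in>Uvec (bas D). (\<lambda>i. p * z i) = Uapp (bas D) (dmat D) w) \<longrightarrow> p = 0))"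

text \<open>Generators: Al s = alpha*_s, At s = tilde alpha*_s, Bm s = b*^(s)_{n-1},
  Bz s = b*^(s)_n, Bp s = b*^(s)_{n+1}.\<close>
datatype gen = Al nat | At nat | Bm nat | Bz nat | Bp nat

definition Cbas :: "nat \<Rightarrow> gen set" where
  "Cbas n = {Al s | s. 1 \<le> s \<and> s \<le> 2*n-1}
    \<union> {At s | s. (1 \<le> s \<and> s \<le> n-2) \<or> (n+1 \<le> s \<and> s \<le> 2*n-2)}
    \<union> {Bm s | s. 1 \<le> s \<and> s \<le> n-2}
    \<union> {Bz s | s. 1 \<le> s \<and> s \<le> 2*n-2}
    \<union> {Bp s | s. n+1 \<le> s \<and> s \<le> 2*n-2}"

fun Cdif :: "nat \<Rightarrow> gen \<Rightarrow> gen \<Rightarrow> R" where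
  "Cdif n i (Bm s) =
     (if 1 \<le> s \<and> s \<le> n-2 then
        (if i = Al s then mono (n*(n-1) div 2) (n*(n-1) div 2)
         else if i = At s then mono 0 (n-s-1) else 0)
      else 0)"
| "Cdif n i (Bz s) =
     (if 1 \<le> s \<and> s \<le> n-2 then
        (if i = Al (s+1) then mono (n*(n+1) div 2 - s) (n*(n+1) div 2)
         else if i = At s then mono n 0 else 0)
      else if n-1 \<le> s \<and> s \<le> n then
        (if i = Al s then mono (n*(n+1) div 2) (n*(n-1) div 2 - n + s + 1)
         else if i = Al (s+1) then mono (n*(n+1) div 2 - s) (n*(n+1) div 2) else 0)
      else if n+1 \<le> s \<and> s \<le> 2*n-2 then
        (if i = Al s then mono (n*(n+1) div 2) (n*(n-1) div 2 - n + s + 1)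
         else if i = At s then mono 0 n else 0)
      else 0)"
| "Cdif n i (Bp s) =
     (if n+1 \<le> s \<and> s \<le> 2*n-2 then
        (if i = Al (s+1) then mono (n*(n-1) div 2) (n*(n-1) div 2)
         else if i = At s then mono (s-n) 0 else 0)
      else 0)"
| "Cdif n i (Al s) = 0"
| "Cdif n i (At s) = 0"

text \<open>C_n^* with a bigrading gr of the generators (the bigrading is determined by
  homogeneity of the differential up to an overall shift).\<close>
definition Cn :: "nat \<Rightarrow> (gen \<Rightarrow> int \<times> int) \<Rightarrow> gen fcx" where
  "Cn n gr = \<lparr>bas = Cbas n, grd = gr, dmat = Cdif n\<rparr>"

end

theory Submission
  imports Defs
begin

lemma mono_coeff: "coeff (coeff (mono p q) q') p' = (if p' = p \<and> q' = q then 1 else 0)"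
  by (auto simp: mono_def coeff_monom)

lemma hom_elt_mono: "hom_elt (mono p q) a b \<Longrightarrow> a = - 2 * int p \<and> b = - 2 * int q"
  unfolding hom_elt_def by (metis mono_coeff one_neq_zero)

lemma hom_elt_nonzero:
  assumes "r \<noteq> 0" "hom_elt r a b" shows "\<exists>p q. a = - 2 * int p \<and> b = - 2 * int q"
proof -
  obtain q where "coeff r q \<noteq> 0" using assms(1) by (metis leading_coeff_0_iff)
  then obtain p where "coeff (coeff r q) p \<noteq> 0" by (metis leading_coeff_0_iff)
  then show ?thesis using assms(2) unfolding hom_elt_def by blast
qed

lemma hom_elt_single:
  assumes "hom_elt r (- 2 * int p) (- 2 * int q)" "r \<noteq> 0" shows "r = mono p q"
proof -
  obtain q0 where "coeff r q0 \<noteq> 0" using assms(2) by (metis leading_coeff_0_iff)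
  then obtain p0 where nz: "coeff (coeff r q0) p0 \<noteq> 0" by (metis leading_coeff_0_iff)
  then have "p0 = p" "q0 = q" using assms(1) unfolding hom_elt_def by force+
  with nz have one: "coeff (coeff r q) p = 1" by simp
  show ?thesis
  proof (rule poly_eqI, rule poly_eqI)
    fix q' p'
    show "coeff (coeff r q') p' = coeff (coeff (mono p q) q') p'"
    proof (cases "p' = p \<and> q' = q")
      case True then show ?thesis using one by (simp add: mono_coeff)
    next
      case False
      then have "coeff (coeff r q') p' = 0" using assms(1) unfolding hom_elt_def by force
      then show ?thesis using False by (simp add: mono_coeff)
    qed
  qed
qed

lemma R_add_self: "(x::R) + x = 0"
proof (rule poly_eqI, rule poly_eqI)
  fix q p show "coeff (coeff (x + x) q) p = coeff (coeff 0 q) p"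
  proof -
    have b: "\<And>c::bit. c + c = 0" by (metis bit_not_zero_iff add_0 one_add_one bit_2_eq_0)
    show ?thesis unfolding coeff_add b by simp
  qed
qed

lemma sum_two:
  assumes "finite A" "P \<in> A" "Q \<in> A" "P \<noteq> Q" "\<And>k. k \<in> A \<Longrightarrow> k \<noteq> P \<Longrightarrow> k \<noteq> Q \<Longrightarrow> g k = 0"
  shows "sum g A = g P + g Q"
proof -
  have "sum g A = sum g {P, Q}"
    by (rule sum.mono_neutral_right) (use assms in auto)
  also have "\<dots> = g P + g Q" using assms(4) by simp
  finally show ?thesis .
qed

lemma Fract_add1: "Fract (a + b) 1 = Fract a 1 + Fract (b::'a::idom) 1"
  by simp
lemma Fract_sum1: "Fract (sum f A) 1 = (\<Sum>x\<in>A. Fract (f x) (1::'a::idom))"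
proof (induction A rule: infinite_finite_induct)
  case (insert x F)
  then show ?case by (simp flip: insert.IH)
qed (auto simp: Zero_fract_def)

lemma Lapp_comp: "Lapp B M1 (Lapp A M2 v) = Lapp A (mat_comp B M1 M2) v"
proof (rule ext)
  fix i
  have "Lapp B M1 (Lapp A M2 v) i = (\<Sum>k\<in>B. \<Sum>j\<in>A. Fract (M1 i k) 1 * (Fract (M2 k j) 1 * v j))"
    unfolding Lapp_def by (simp add: sum_distrib_left)
  also have "\<dots> = (\<Sum>j\<in>A. \<Sum>k\<in>B. Fract (M1 i k * M2 k j) 1 * v j)"
    by (subst sum.swap) (simp add: mult.assoc[symmetric])
  also have "\<dots> = Lapp A (mat_comp B M1 M2) v i"
    unfolding Lapp_def mat_comp_def by (simp add: Fract_sum1 sum_distrib_right)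
  finally show "Lapp B M1 (Lapp A M2 v) i = Lapp A (mat_comp B M1 M2) v i" .
qed

lemma Uapp_comp: "Uapp B M1 (Uapp A M2 v) = Uapp A (mat_comp B M1 M2) v"
proof (rule ext)
  fix i
  have "Uapp B M1 (Uapp A M2 v) i = (\<Sum>k\<in>B. \<Sum>j\<in>A. poly (M1 i k) 1 * (poly (M2 k j) 1 * v j))"
    unfolding Uapp_def by (simp add: sum_distrib_left)
  also have "\<dots> = (\<Sum>j\<in>A. \<Sum>k\<in>B. poly (M1 i k * M2 k j) 1 * v j)"
    by (subst sum.swap) (simp add: mult.assoc)
  also have "\<dots> = Uapp A (mat_comp B M1 M2) v i"
    unfolding Uapp_def mat_comp_def by (simp add: poly_sum sum_distrib_right)
  finally show "Uapp B M1 (Uapp A M2 v) i = Uapp A (mat_comp B M1 M2) v i" .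
qed

lemma Lapp_delta: "finite A \<Longrightarrow> j \<in> A \<Longrightarrow> Lapp A M (\<lambda>k. if k = j then 1 else 0) = (\<lambda>i. Fract (M i j) 1)"
  unfolding Lapp_def by (simp add: fun_eq_iff if_distrib cong: if_cong)

lemma Uapp_delta: "finite A \<Longrightarrow> j \<in> A \<Longrightarrow> Uapp A M (\<lambda>k. if k = j then 1 else 0) = (\<lambda>i. poly (M i j) 1)"
  unfolding Uapp_def by (simp add: fun_eq_iff if_distrib cong: if_cong)

lemma Uapp_smult: "Uapp A M (\<lambda>k. a * v k) = (\<lambda>i. a * Uapp A M v i)"
  unfolding Uapp_def by (simp add: fun_eq_iff sum_distrib_left mult.left_commute)

lemma Uapp_diff: "Uapp A M (\<lambda>k. v k - v' k) = (\<lambda>i. Uapp A M v i - Uapp A M v' i)"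
  unfolding Uapp_def by (simp add: fun_eq_iff right_diff_distrib sum_subtractf)

lemma poly_mono1: "poly (mono a b) 1 = monom 1 a"
  by (simp add: mono_def poly_monom)

lemma Al_in[simp]: "Al s \<in> Cbas n \<longleftrightarrow> 1 \<le> s \<and> s \<le> 2*n-1" by (auto simp: Cbas_def)
lemma At_in[simp]: "At s \<in> Cbas n \<longleftrightarrow> (1 \<le> s \<and> s \<le> n-2) \<or> (n+1 \<le> s \<and> s \<le> 2*n-2)" by (auto simp: Cbas_def)
lemma Bm_in[simp]: "Bm s \<in> Cbas n \<longleftrightarrow> 1 \<le> s \<and> s \<le> n-2" by (auto simp: Cbas_def)
lemma Bz_in[simp]: "Bz s \<in> Cbas n \<longleftrightarrow> 1 \<le> s \<and> s \<le> 2*n-2" by (auto simp: Cbas_def)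
lemma Bp_in[simp]: "Bp s \<in> Cbas n \<longleftrightarrow> n+1 \<le> s \<and> s \<le> 2*n-2" by (auto simp: Cbas_def)

lemma NM: fixes n :: nat assumes n: "n \<ge> 3"
  shows "n*(n+1) div 2 = n*(n-1) div 2 + n \<and> n \<le> n*(n-1) div 2"
proof -
  have e: "n*(n+1) = n*(n-1) + 2*n" using n by (cases n) (auto simp: algebra_simps)
  have "2*n \<le> (n-1)*n" using n by (intro mult_le_mono1) auto
  then have "2*n \<le> n*(n-1)" by (simp add: mult.commute)
  then have "(2*n) div 2 \<le> n*(n-1) div 2" using div_le_mono by blast
  moreover have "n*(n+1) div 2 = n*(n-1) div 2 + n" using e by simp
  ultimately show ?thesis by simp
qed

lemma grel:
  assumes "is_fcx (Cn n gr)" "i \<in> Cbas n" "j \<in> Cbas n" "Cdif n i j = mono p q"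
  shows "fst (gr j) - 1 - fst (gr i) = - 2 * int p \<and> snd (gr j) - 1 - snd (gr i) = - 2 * int q"
proof -
  have "hom_elt (Cdif n i j) (fst (gr j) - 1 - fst (gr i)) (snd (gr j) - 1 - snd (gr i))"
  proof -
    have "\<forall>i\<in>bas (Cn n gr). \<forall>j\<in>bas (Cn n gr). hom_elt (dmat (Cn n gr) i j)
          (fst (grd (Cn n gr) j) - 1 - fst (grd (Cn n gr) i)) (snd (grd (Cn n gr) j) - 1 - snd (grd (Cn n gr) i))"
      using assms(1) unfolding is_fcx_def by blast
    then show ?thesis using assms(2,3) unfolding Cn_def by simp
  qed
  then show ?thesis using assms(4) hom_elt_mono by metis
qed

context
  fixes n :: nat and gr :: "gen \<Rightarrow> int \<times> int"
  assumes fcx: "is_fcx (Cn n gr)" and n3: "n \<ge> 3"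
begin

lemma NMi: "int (n*(n+1) div 2) = int (n*(n-1) div 2) + int n" "int n \<le> int (n*(n-1) div 2)"
  using NM[OF n3] by auto

lemma L1:
  assumes s: "1 \<le> s" "s \<le> n-2"
  shows "snd (gr (Al s)) \<le> snd (gr (Al (s+1)))"
    "snd (gr (At s)) = snd (gr (Al (s+1))) - 2 * int (n*(n+1) div 2)"
    "snd (gr (Bm s)) = snd (gr (Al s)) - 2 * int (n*(n-1) div 2) + 1"
    "snd (gr (Bz s)) = snd (gr (Al (s+1))) - 2 * int (n*(n+1) div 2) + 1"
proof -
  have a: "Cdif n (Al s) (Bm s) = mono (n*(n-1) div 2) (n*(n-1) div 2)" using s by simp
  have b: "Cdif n (At s) (Bm s) = mono 0 (n-s-1)" using s by simp
  have c: "Cdif n (Al (s+1)) (Bz s) = mono (n*(n+1) div 2 - s) (n*(n+1) div 2)" using s by simp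
  have d: "Cdif n (At s) (Bz s) = mono n 0" using s by simp
  note ga = grel[OF fcx _ _ a] and gb = grel[OF fcx _ _ b] and gc = grel[OF fcx _ _ c] and gd = grel[OF fcx _ _ d]
  have m: "Al s \<in> Cbas n" "At s \<in> Cbas n" "Bm s \<in> Cbas n" "Bz s \<in> Cbas n" "Al (s+1) \<in> Cbas n"
    using s n3 by auto
  have e: "int (n-s-1) = int n - int s - 1" using s n3 by auto
  show "snd (gr (Al s)) \<le> snd (gr (Al (s+1)))"
    using ga[OF m(1) m(3)] gb[OF m(2) m(3)] gc[OF m(5) m(4)] gd[OF m(2) m(4)] NMi e by linarith
  show "snd (gr (At s)) = snd (gr (Al (s+1))) - 2 * int (n*(n+1) div 2)"
    using gc[OF m(5) m(4)] gd[OF m(2) m(4)] by linarith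
  show "snd (gr (Bm s)) = snd (gr (Al s)) - 2 * int (n*(n-1) div 2) + 1"
    using ga[OF m(1) m(3)] by linarith
  show "snd (gr (Bz s)) = snd (gr (Al (s+1))) - 2 * int (n*(n+1) div 2) + 1"
    using gc[OF m(5) m(4)] by linarith
qed

lemma L2:
  shows "snd (gr (Al (n-1))) = snd (gr (Al n)) - 2 * int n"
    "fst (gr (Al (n-1))) = fst (gr (Al n)) + 2 * int n - 2"
    "fst (gr (Bz (n-1))) = fst (gr (Al n)) - 2 * int (n*(n-1) div 2) - 1"
proof -
  have N: "n * (n - 1) div 2 - n + (n - 1) + 1 = n*(n-1) div 2" using NM[OF n3] n3 by auto
  have nn: "\<not> (n-1 \<le> n-2)" "n - 1 + 1 = n" "n-1 \<noteq> n" "1 \<le> n-1" using n3 by auto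
  have a: "Cdif n (Al (n-1)) (Bz (n-1)) = mono (n*(n+1) div 2) (n*(n-1) div 2)" using nn N by simp
  have b: "Cdif n (Al n) (Bz (n-1)) = mono (n*(n+1) div 2 - (n-1)) (n*(n+1) div 2)" using nn by simp
  have m: "Al (n-1) \<in> Cbas n" "Al n \<in> Cbas n" "Bz (n-1) \<in> Cbas n" using n3 by auto
  note ga = grel[OF fcx m(1) m(3) a] and gb = grel[OF fcx m(2) m(3) b]
  have e: "int (n*(n+1) div 2 - (n-1)) = int (n*(n+1) div 2) - int n + 1" using NM[OF n3] n3 by auto
  show "snd (gr (Al (n-1))) = snd (gr (Al n)) - 2 * int n" using ga gb NMi by linarith
  show "fst (gr (Al (n-1))) = fst (gr (Al n)) + 2 * int n - 2" using ga gb e by linarith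
  show "fst (gr (Bz (n-1))) = fst (gr (Al n)) - 2 * int (n*(n-1) div 2) - 1" using gb e NMi by linarith
qed

lemma L3:
  shows "fst (gr (Al (n+1))) = fst (gr (Al n)) - 2 * int n"
    "fst (gr (Bz n)) = fst (gr (Al n)) - 2 * int (n*(n+1) div 2) + 1"
proof -
  have nn: "\<not> (n \<le> n-2)" "n - 1 \<le> n" "n+1 \<noteq> n" "1 \<le> n" using n3 by auto
  have a: "Cdif n (Al n) (Bz n) = mono (n*(n+1) div 2) (n*(n-1) div 2 - n + n + 1)" using nn by simp
  have b: "Cdif n (Al (n+1)) (Bz n) = mono (n*(n+1) div 2 - n) (n*(n+1) div 2)" using nn by simp
  have m: "Al n \<in> Cbas n" "Al (n+1) \<in> Cbas n" "Bz n \<in> Cbas n" using n3 by auto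
  note ga = grel[OF fcx m(1) m(3) a] and gb = grel[OF fcx m(2) m(3) b]
  have e: "int (n*(n+1) div 2 - n) = int (n*(n+1) div 2) - int n" using NM[OF n3] n3 by auto
  show "fst (gr (Al (n+1))) = fst (gr (Al n)) - 2 * int n" using ga gb e by linarith
  show "fst (gr (Bz n)) = fst (gr (Al n)) - 2 * int (n*(n+1) div 2) + 1" using ga by linarith
qed

lemma L4:
  assumes s: "n+1 \<le> s" "s \<le> 2*n-2"
  shows "fst (gr (Al (s+1))) \<le> fst (gr (Al s))"
    "fst (gr (At s)) = fst (gr (Al s)) - 2 * int (n*(n+1) div 2)"
    "fst (gr (Bz s)) = fst (gr (Al s)) - 2 * int (n*(n+1) div 2) + 1"
    "fst (gr (Bp s)) = fst (gr (Al (s+1))) - 2 * int (n*(n-1) div 2) + 1"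
proof -
  have ss: "\<not> s \<le> n-2" "\<not> s \<le> n" "1 \<le> s" "n+1 \<le> s" "s \<le> 2*n-2" using s by auto
  have a: "Cdif n (Al s) (Bz s) = mono (n*(n+1) div 2) (n*(n-1) div 2 - n + s + 1)" using ss by simp
  have b: "Cdif n (At s) (Bz s) = mono 0 n" using ss by simp
  have c: "Cdif n (Al (s+1)) (Bp s) = mono (n*(n-1) div 2) (n*(n-1) div 2)" using s by simp
  have d: "Cdif n (At s) (Bp s) = mono (s-n) 0" using s by simp
  have m: "Al s \<in> Cbas n" "At s \<in> Cbas n" "Bz s \<in> Cbas n" "Bp s \<in> Cbas n" "Al (s+1) \<in> Cbas n"
    using s n3 by auto
  note ga = grel[OF fcx m(1) m(3) a] and gb = grel[OF fcx m(2) m(3) b]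
    and gc = grel[OF fcx m(5) m(4) c] and gd = grel[OF fcx m(2) m(4) d]
  have e: "int (s-n) = int s - int n" using s by auto
  show "fst (gr (Al (s+1))) \<le> fst (gr (Al s))" using ga gb gc gd e NMi s by linarith
  show "fst (gr (At s)) = fst (gr (Al s)) - 2 * int (n*(n+1) div 2)" using ga gb by linarith
  show "fst (gr (Bz s)) = fst (gr (Al s)) - 2 * int (n*(n+1) div 2) + 1" using ga by linarith
  show "fst (gr (Bp s)) = fst (gr (Al (s+1))) - 2 * int (n*(n-1) div 2) + 1" using gc by linarith
qed

lemma I1: assumes "1 \<le> s" "s \<le> n-1" shows "snd (gr (Al s)) \<le> snd (gr (Al n)) - 2 * int n"
proof -
  have "\<forall>k. k \<le> n-2 \<longrightarrow> snd (gr (Al (n-1-k))) \<le> snd (gr (Al (n-1)))"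
  proof (intro allI)
    fix k show "k \<le> n-2 \<longrightarrow> snd (gr (Al (n-1-k))) \<le> snd (gr (Al (n-1)))"
    proof (induction k)
      case 0 then show ?case by simp
    next
      case (Suc k)
      show ?case
      proof
        assume k: "Suc k \<le> n-2"
        have "snd (gr (Al (n-1-Suc k))) \<le> snd (gr (Al (n-1-Suc k + 1)))"
          using L1(1)[of "n-1-Suc k"] k n3 by auto
        moreover have "n-1-Suc k + 1 = n-1-k" using k n3 by auto
        ultimately show "snd (gr (Al (n-1-Suc k))) \<le> snd (gr (Al (n-1)))" using Suc k by auto
      qed
    qed
  qed
  note H = this
  have k: "n-1-s \<le> n-2" using assms n3 by auto
  have "snd (gr (Al (n-1-(n-1-s)))) \<le> snd (gr (Al (n-1)))" using H k by blast
  moreover have "n-1-(n-1-s) = s" using assms by auto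
  ultimately show ?thesis using L2(1) by auto
qed

lemma I2: assumes "n+1 \<le> s" "s \<le> 2*n-1" shows "fst (gr (Al s)) \<le> fst (gr (Al n)) - 2 * int n"
proof -
  have "\<forall>k. n+1+k \<le> 2*n-1 \<longrightarrow> fst (gr (Al (n+1+k))) \<le> fst (gr (Al (n+1)))"
  proof (intro allI)
    fix k show "n+1+k \<le> 2*n-1 \<longrightarrow> fst (gr (Al (n+1+k))) \<le> fst (gr (Al (n+1)))"
    proof (induction k)
      case 0 then show ?case by simp
    next
      case (Suc k)
      show ?case
      proof
        assume k: "n+1+Suc k \<le> 2*n-1"
        have "fst (gr (Al (n+1+k+1))) \<le> fst (gr (Al (n+1+k)))"
          using L4(1)[of "n+1+k"] k n3 by auto
        then show "fst (gr (Al (n+1+Suc k))) \<le> fst (gr (Al (n+1)))" using Suc k by auto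
      qed
    qed
  qed
  note H = this
  have k: "n+1+(s-n-1) \<le> 2*n-1" using assms n3 by auto
  have "fst (gr (Al (n+1+(s-n-1)))) \<le> fst (gr (Al (n+1)))" using H k by blast
  moreover have "n+1+(s-n-1) = s" using assms by auto
  ultimately show ?thesis using L3(1) by auto
qed

end

context
  fixes n :: nat and gr :: "gen \<Rightarrow> int \<times> int"
  assumes fcx: "is_fcx (Cn n gr)" and n3: "n \<ge> 3"
begin

lemma zero_col:
  assumes i: "i \<in> Cbas n" "i \<noteq> Al n"
  shows "fst (gr i) \<le> fst (gr (Al n)) - 2 * int n + 2 \<or> snd (gr i) \<le> snd (gr (Al n)) - 2 * int n"
proof -
  have M0: "int (n*(n+1) div 2) \<ge> int n" "int (n*(n-1) div 2) \<ge> int n" using NMi[OF fcx n3] n3 by auto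
  show ?thesis
  proof (cases i)
    case (Al s)
    then show ?thesis
    proof (cases "s < n")
      case True
      have "1 \<le> s" "s \<le> n-1" using True Al i by auto
      then show ?thesis using I1[OF fcx n3, of s] Al by auto
    next
      case False
      have "n+1 \<le> s" "s \<le> 2*n-1" using False Al i by auto
      then show ?thesis using I2[OF fcx n3, of s] Al by auto
    qed
  next
    case (At s)
    then show ?thesis
    proof (cases "s \<le> n-2")
      case True
      have s: "1 \<le> s" "s \<le> n-2" "1 \<le> s+1" "s+1 \<le> n-1" using True At i n3 by auto
      have "snd (gr (Al (s+1))) \<le> snd (gr (Al n)) - 2 * int n" using I1[OF fcx n3 s(3,4)] .
      then have "snd (gr (At s)) \<le> snd (gr (Al n)) - 2 * int n" using L1(2)[OF fcx n3 s(1,2)] M0 by linarith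
      then show ?thesis using At by simp
    next
      case False
      have s: "n+1 \<le> s" "s \<le> 2*n-2" "s \<le> 2*n-1" using False At i n3 by auto
      have "fst (gr (At s)) \<le> fst (gr (Al n)) - 2 * int n + 2" using I2[OF fcx n3 s(1,3)] L4(2)[OF fcx n3 s(1,2)] M0 by linarith
      then show ?thesis using At by simp
    qed
  next
    case (Bm s)
    have s: "1 \<le> s" "s \<le> n-2" "s \<le> n-1" using Bm i n3 by auto
    have "snd (gr (Bm s)) \<le> snd (gr (Al n)) - 2 * int n" using I1[OF fcx n3 s(1,3)] L1(3)[OF fcx n3 s(1,2)] M0 n3 by linarith
    then show ?thesis using Bm by simp
  next
    case (Bz s)
    then show ?thesis
    proof (cases "s \<le> n-2")
      case True
      have s: "1 \<le> s" "s \<le> n-2" "1 \<le> s+1" "s+1 \<le> n-1" using True Bz i n3 by auto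
      have "snd (gr (Bz s)) \<le> snd (gr (Al n)) - 2 * int n" using I1[OF fcx n3 s(3,4)] L1(4)[OF fcx n3 s(1,2)] M0 n3 by linarith
      then show ?thesis using Bz by simp
    next
      case F1: False
      show ?thesis
      proof (cases "s = n-1")
        case True
        have "fst (gr (Bz (n-1))) \<le> fst (gr (Al n)) - 2 * int n + 2" using L2(3)[OF fcx n3] M0 by linarith
        then show ?thesis using Bz True by simp
      next
        case F2: False
        show ?thesis
        proof (cases "s = n")
          case True
          have "fst (gr (Bz n)) \<le> fst (gr (Al n)) - 2 * int n + 2" using L3(2)[OF fcx n3] M0 by linarith
          then show ?thesis using Bz True by simp
        next
          case False
          have s: "n+1 \<le> s" "s \<le> 2*n-2" "s \<le> 2*n-1" using False F1 F2 Bz i n3 by auto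
          have "fst (gr (Bz s)) \<le> fst (gr (Al n)) - 2 * int n + 2" using I2[OF fcx n3 s(1,3)] L4(3)[OF fcx n3 s(1,2)] M0 by linarith
          then show ?thesis using Bz by simp
        qed
      qed
    qed
  next
    case (Bp s)
    have s: "n+1 \<le> s" "s \<le> 2*n-2" "n+1 \<le> s+1" "s+1 \<le> 2*n-1" using Bp i n3 by auto
    have "fst (gr (Bp s)) \<le> fst (gr (Al n)) - 2 * int n + 2" using I2[OF fcx n3 s(3,4)] L4(4)[OF fcx n3 s(1,2)] M0 n3 by linarith
    then show ?thesis using Bp by simp
  qed
qed

end

definition psi :: "nat \<Rightarrow> (gen \<Rightarrow> int \<times> int) \<Rightarrow> gen \<Rightarrow> R" where
  "psi n gr i = mono (nat ((Max ((\<lambda>j. fst (gr j)) ` Cbas n) - fst (gr i)) div 2))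
                     (nat ((Max ((\<lambda>j. snd (gr j)) ` Cbas n) - snd (gr i)) div 2))"

lemma div2_sub: "(a - 2 * b) div 2 = a div 2 - (b::int)"
  using div_mult_self1[of 2 a "-b"] by (simp add: algebra_simps)

lemma mono_mult: "mono a b * mono c d = mono (a+c) (b+d)"
  by (simp add: mono_def mult_monom)

lemma exp_eq:
  assumes "mu \<ge> (gP::int)" "mu \<ge> gQ" "g - 1 - gP = - 2 * int p" "g - 1 - gQ = - 2 * int p'"
  shows "nat ((mu - gP) div 2) + p = nat ((mu - gQ) div 2) + p'"
proof -
  have a: "(mu - gP) div 2 = (mu - g + 1) div 2 - int p"
    using div2_sub[of "mu - g + 1" "int p"] assms(3) by (simp add: algebra_simps)
  have b: "(mu - gQ) div 2 = (mu - g + 1) div 2 - int p'"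
    using div2_sub[of "mu - g + 1" "int p'"] assms(4) by (simp add: algebra_simps)
  have "(mu - gP) div 2 \<ge> 0" "(mu - gQ) div 2 \<ge> 0" using assms(1,2) by auto
  then show ?thesis using a b by (simp add: nat_diff_distrib')
qed

context
  fixes n :: nat and gr :: "gen \<Rightarrow> int \<times> int"
  assumes fcx: "is_fcx (Cn n gr)" and n3: "n \<ge> 3"
begin

lemma finC: "finite (Cbas n)" using fcx unfolding is_fcx_def Cn_def by simp

lemma psi_two:
  assumes eq: "\<And>i. Cdif n i k = (if i = P then mono p q else if i = Q then mono p' q' else 0)"
    and PQ: "P \<noteq> Q" "P \<in> Cbas n" "Q \<in> Cbas n" "k \<in> Cbas n"
  shows "(\<Sum>i\<in>Cbas n. psi n gr i * Cdif n i k) = 0"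
proof -
  have "(\<Sum>i\<in>Cbas n. psi n gr i * Cdif n i k) = psi n gr P * Cdif n P k + psi n gr Q * Cdif n Q k"
    by (rule sum_two[OF finC PQ(2,3,1)]) (simp add: eq)
  also have "\<dots> = psi n gr P * mono p q + psi n gr Q * mono p' q'" using eq PQ(1) by simp
  also have "\<dots> = 0"
  proof -
    have P1: "Cdif n P k = mono p q" and Q1: "Cdif n Q k = mono p' q'" using eq PQ(1) by auto
    note gP = grel[OF fcx PQ(2) PQ(4) P1] and gQ = grel[OF fcx PQ(3) PQ(4) Q1]
    have mu: "fst (gr P) \<le> Max ((\<lambda>j. fst (gr j)) ` Cbas n)" "fst (gr Q) \<le> Max ((\<lambda>j. fst (gr j)) ` Cbas n)"
      "snd (gr P) \<le> Max ((\<lambda>j. snd (gr j)) ` Cbas n)" "snd (gr Q) \<le> Max ((\<lambda>j. snd (gr j)) ` Cbas n)"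
      using finC PQ by auto
    have e1: "nat ((Max ((\<lambda>j. fst (gr j)) ` Cbas n) - fst (gr P)) div 2) + p =
              nat ((Max ((\<lambda>j. fst (gr j)) ` Cbas n) - fst (gr Q)) div 2) + p'"
      by (rule exp_eq[OF mu(1,2)]) (use gP gQ in auto)
    have e2: "nat ((Max ((\<lambda>j. snd (gr j)) ` Cbas n) - snd (gr P)) div 2) + q =
              nat ((Max ((\<lambda>j. snd (gr j)) ` Cbas n) - snd (gr Q)) div 2) + q'"
      by (rule exp_eq[OF mu(3,4)]) (use gP gQ in auto)
    show ?thesis unfolding psi_def mono_mult e1 e2 by (rule R_add_self)
  qed
  finally show ?thesis .
qed

lemma psi_col:
  assumes k: "k \<in> Cbas n"
  shows "(\<Sum>i\<in>Cbas n. psi n gr i * Cdif n i k) = 0"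
proof (cases k)
  case (Al s) then show ?thesis by simp
next
  case (At s) then show ?thesis by simp
next
  case (Bm s)
  have s: "1 \<le> s" "s \<le> n-2" using k Bm by auto
  show ?thesis unfolding Bm
    by (rule psi_two[of _ "Al s" _ _ "At s"]) (use s k Bm in auto)
next
  case (Bz s)
  have s: "1 \<le> s" "s \<le> 2*n-2" using k Bz by auto
  show ?thesis
  proof (cases "s \<le> n-2")
    case True
    show ?thesis unfolding Bz
      by (rule psi_two[of _ "Al (s+1)" _ _ "At s"]) (use s k Bz True in auto)
  next
    case F: False
    show ?thesis
    proof (cases "s \<le> n")
      case True
      show ?thesis unfolding Bz
        by (rule psi_two[of _ "Al s" _ _ "Al (s+1)"]) (use s k Bz True F n3 in auto)
    next
      case False
      show ?thesis unfolding Bz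
        by (rule psi_two[of _ "Al s" _ _ "At s"]) (use s k Bz False F n3 in auto)
    qed
  qed
next
  case (Bp s)
  have s: "n+1 \<le> s" "s \<le> 2*n-2" using k Bp by auto
  show ?thesis unfolding Bp
    by (rule psi_two[of _ "Al (s+1)" _ _ "At s"]) (use s k Bp in auto)
qed

end

lemma mono_nz: "mono p q \<noteq> 0"
proof
  assume "mono p q = 0"
  then have "coeff (coeff (mono p q) q) p = 0" by simp
  then show False by (simp add: mono_coeff)
qed

lemma Fract1_nz: "a \<noteq> 0 \<Longrightarrow> Fract (a::'a::idom) 1 \<noteq> 0"
  by (simp add: Zero_fract_def eq_fract)

lemma monom_dvd: "k \<le> j \<Longrightarrow> monom (1::bit) k dvd monom 1 j"
proof -
  assume "k \<le> j"
  then have "monom (1::bit) j = monom 1 k * monom 1 (j - k)" by (simp add: mult_monom)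
  then show ?thesis by simp
qed

definition tvec :: "nat \<Rightarrow> gen \<Rightarrow> bit poly" where
  "tvec n k = (if k = Al n then 1 else if k = Al (n-1) then monom 1 (n-1) else 0)"

context
  fixes n :: nat and gr :: "gen \<Rightarrow> int \<times> int"
  assumes fcx: "is_fcx (Cn n gr)" and n3: "n \<ge> 3"
begin

lemma not_bd: "(\<lambda>k. if k = Al n then 1 else 0) \<noteq> Lapp (Cbas n) (Cdif n) u"
proof
  assume H: "(\<lambda>k. if k = Al n then 1 else 0) = Lapp (Cbas n) (Cdif n) u"
  have m: "Al n \<in> Cbas n" using n3 by simp
  have "Lapp (Cbas n) (\<lambda>_ i. psi n gr i) (\<lambda>k. if k = Al n then 1 else 0) = (\<lambda>_. Fract (psi n gr (Al n)) 1)"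
    using Lapp_delta[OF finC[OF fcx n3] m, of "\<lambda>_. psi n gr"] by simp
  moreover have "Lapp (Cbas n) (\<lambda>_ i. psi n gr i) (Lapp (Cbas n) (Cdif n) u) = (\<lambda>_. 0)"
    unfolding Lapp_comp unfolding Lapp_def mat_comp_def
    using psi_col[OF fcx n3] by (simp add: Zero_fract_def[symmetric])
  ultimately have "Fract (psi n gr (Al n)) 1 = 0" using H by metis
  then show False using Fract1_nz mono_nz unfolding psi_def by metis
qed

lemma t_cycle: "Uapp (Cbas n) (Cdif n) (tvec n) = (\<lambda>_. 0)"
  unfolding Uapp_def tvec_def by (rule ext, rule sum.neutral) auto

lemma e_bd: "Uapp (Cbas n) (Cdif n) (\<lambda>k. if k = Bz (n-1) then 1 else 0)
   = (\<lambda>i. monom 1 (n*(n+1) div 2 - (n-1)) * tvec n i)"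
proof -
  have m: "Bz (n-1) \<in> Cbas n" using n3 by (simp, arith)
  have nn: "\<not> (n-1 \<le> n-2)" "n - 1 + 1 = n" "n-1 \<noteq> n" "1 \<le> n-1" "Al (n-1+1) = Al n" using n3 by auto
  have M: "n*(n+1) div 2 - (n-1) + (n-1) = n*(n+1) div 2" using NM[OF n3] by auto
  show ?thesis unfolding Uapp_delta[OF finC[OF fcx n3] m]
  proof (rule ext)
    fix i
    show "poly (Cdif n i (Bz (n-1))) 1 = monom 1 (n*(n+1) div 2 - (n-1)) * tvec n i"
      using nn M by (auto simp: tvec_def poly_mono1 mult_monom)
  qed
qed

lemma row_dvd:
  assumes k: "k \<in> Cbas n"
  shows "monom 1 (n*(n+1) div 2 - (n-1)) dvd poly (Cdif n (Al n) k) 1"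
proof (cases k)
  case (Bz s)
  have M: "n*(n+1) div 2 - (n-1) \<le> n*(n+1) div 2" by simp
  show ?thesis
  proof (cases "s \<le> n-2")
    case True then show ?thesis using Bz n3 by auto
  next
    case F: False
    show ?thesis
    proof (cases "s = n-1")
      case True then show ?thesis using Bz n3 by (auto simp: poly_mono1)
    next
      case F2: False
      show ?thesis
      proof (cases "s = n")
        case True then show ?thesis using Bz n3 M by (auto simp: poly_mono1 monom_dvd)
      next
        case False then show ?thesis using Bz n3 F F2 by auto
      qed
    qed
  qed
qed (use n3 in auto)

end

lemma Cn_simps[simp]: "bas (Cn n gr) = Cbas n" "grd (Cn n gr) = gr" "dmat (Cn n gr) = Cdif n"
  by (simp_all add: Cn_def)

lemma Fract_in_Lring: "Fract r 1 \<in> Lring"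
proof -
  have "mono 0 0 = 1" by (simp add: mono_def)
  then show ?thesis unfolding Lring_def by (metis (mono_tags, lifting) mem_Collect_eq)
qed

lemma zero_in_Lring: "0 \<in> Lring" using Fract_in_Lring[of 0] by (simp add: Zero_fract_def)
lemma one_in_Lring: "1 \<in> Lring" using Fract_in_Lring[of 1] by (simp add: One_fract_def)

lemma Lapp_zero: "Lapp A M (\<lambda>_. 0) = (\<lambda>_. 0)" unfolding Lapp_def by simp
lemma Uapp_zero: "Uapp A M (\<lambda>_. 0) = (\<lambda>_. 0)" unfolding Uapp_def by simp

theorem lemma2p12:
  fixes n :: nat and gr :: "gen \<Rightarrow> int \<times> int"
    and D :: "'d fcx" and F :: "'d \<Rightarrow> gen \<Rightarrow> R"
  assumes "n \<ge> 3"
    and "is_fcx (Cn n gr)"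
    and "is_fcx D"
    and "knotlike D"
    and "local_map (Cn n gr) D F"
  shows "\<not> (\<exists>(G :: gen \<Rightarrow> 'd \<Rightarrow> R) c1 c2. local_map D (Cn n gr) G
            \<and> hom_map (Cn n gr) (Cn n gr) (mat_comp (bas D) G F) c1 c2
            \<and> c1 > - 2 * int n + 2 \<and> c2 > - 2 * int n)"
proof
  assume "\<exists>(G :: gen \<Rightarrow> 'd \<Rightarrow> R) c1 c2. local_map D (Cn n gr) G
            \<and> hom_map (Cn n gr) (Cn n gr) (mat_comp (bas D) G F) c1 c2
            \<and> c1 > - 2 * int n + 2 \<and> c2 > - 2 * int n"
  then obtain G :: "gen \<Rightarrow> 'd \<Rightarrow> R" and c1 c2 where lG: "local_map D (Cn n gr) G"
    and hh: "hom_map (Cn n gr) (Cn n gr) (mat_comp (bas D) G F) c1 c2"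
    and c1: "c1 > - 2 * int n + 2" and c2: "c2 > - 2 * int n" by blast
  note n3 = assms(1) and fcx = assms(2)
  define h where "h = mat_comp (bas D) G F"
  have finC: "finite (Cbas n)" using finC[OF fcx n3] .
  have finD: "finite (bas D)" using assms(3) unfolding is_fcx_def by simp
  obtain a1 a2 where hF: "hom_map (Cn n gr) D F a1 a2" and chF: "chain_map (Cn n gr) D F"
    and liF: "loc_iso (Cn n gr) D F" using assms(5) unfolding local_map_def by blast
  have chG: "chain_map D (Cn n gr) G" and liG: "loc_iso D (Cn n gr) G"
    using lG unfolding local_map_def by auto
  have Fz: "\<And>i j. i \<notin> bas D \<Longrightarrow> F i j = 0" using hF unfolding hom_map_def by simp
  have Dz: "\<And>i j. i \<notin> bas D \<Longrightarrow> dmat D i j = 0" using assms(3) unfolding is_fcx_def by simp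
  have chF': "mat_comp (bas D) (dmat D) F = mat_comp (Cbas n) F (Cdif n)"
    using chF unfolding chain_map_def mat_comp_def by (simp add: fun_eq_iff)
  have chG': "mat_comp (Cbas n) (Cdif n) G = mat_comp (bas D) G (dmat D)"
    using chG unfolding chain_map_def mat_comp_def by (simp add: fun_eq_iff)
  have hz: "\<And>i j. i \<notin> Cbas n \<Longrightarrow> h i j = 0" using hh unfolding hom_map_def h_def by simp
  have hhom: "\<And>i j. i \<in> Cbas n \<Longrightarrow> j \<in> Cbas n \<Longrightarrow> hom_elt (h i j)
          (fst (gr j) + c1 - fst (gr i)) (snd (gr j) + c2 - snd (gr i))"
    using hh unfolding hom_map_def h_def by simp
  have mAl: "Al n \<in> Cbas n" "Al (n-1) \<in> Cbas n" "Al n \<noteq> Al (n-1)" using n3 by auto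

  have ex_nz: "\<exists>i. h i (Al n) \<noteq> 0"
  proof (rule ccontr)
    assume allz: "\<not> (\<exists>i. h i (Al n) \<noteq> 0)"
    define x :: "gen \<Rightarrow> R fract" where "x = (\<lambda>k. if k = Al n then 1 else 0)"
    have xL: "x \<in> Lvec (Cbas n)" unfolding x_def Lvec_def using mAl zero_in_Lring one_in_Lring by auto
    have cx: "Lapp (Cbas n) (Cdif n) x = (\<lambda>_. 0)"
      unfolding x_def Lapp_delta[OF finC mAl(1)] by (simp add: Zero_fract_def)
    define y where "y = Lapp (Cbas n) F x"
    have y_eq: "y = (\<lambda>i. Fract (F i (Al n)) 1)" unfolding y_def x_def Lapp_delta[OF finC mAl(1)] ..
    have yL: "y \<in> Lvec (bas D)" unfolding Lvec_def y_eq using Fz Fract_in_Lring by (auto simp: Zero_fract_def)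
    have cy: "\<forall>i. Lapp (bas D) (dmat D) y i = 0"
      unfolding y_def Lapp_comp chF' Lapp_comp[symmetric] cx Lapp_zero by simp
    have "Lapp (bas D) G y = Lapp (Cbas n) h x" unfolding y_def Lapp_comp h_def ..
    also have "\<dots> = (\<lambda>i. Fract (h i (Al n)) 1)" unfolding x_def Lapp_delta[OF finC mAl(1)] ..
    finally have z_eq: "Lapp (bas D) G y = (\<lambda>_. 0)" using allz by (simp add: Zero_fract_def)
    have "\<exists>w\<in>Lvec (Cbas n). Lapp (bas D) G y = Lapp (Cbas n) (Cdif n) w"
      by (rule bexI[of _ "\<lambda>_. 0"]) (auto simp: z_eq Lapp_zero Lvec_def zero_in_Lring)
    then obtain u where uL: "u \<in> Lvec (bas D)" and yu: "y = Lapp (bas D) (dmat D) u"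
      using liG yL cy unfolding loc_iso_def by auto
    have "\<forall>i. Lapp (Cbas n) (Cdif n) x i = 0" using cx by simp
    moreover have "\<exists>w\<in>Lvec (bas D). Lapp (Cbas n) F x = Lapp (bas D) (dmat D) w"
      using uL yu y_def by auto
    ultimately obtain u' where "x = Lapp (Cbas n) (Cdif n) u'"
      using liF xL unfolding loc_iso_def by auto
    then show False using not_bd[OF fcx n3] unfolding x_def by blast
  qed
  have h_nz: "h (Al n) (Al n) \<noteq> 0"
  proof (rule ccontr)
    assume hz0: "\<not> h (Al n) (Al n) \<noteq> 0"
    obtain i where i: "h i (Al n) \<noteq> 0" using ex_nz by blast
    have iC: "i \<in> Cbas n" using i hz by blast
    have iA: "i \<noteq> Al n" using i hz0 by blast
    obtain p q where pq: "fst (gr (Al n)) + c1 - fst (gr i) = - 2 * int p"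
      "snd (gr (Al n)) + c2 - snd (gr i) = - 2 * int q"
      using hom_elt_nonzero[OF i hhom[OF iC mAl(1)]] by blast
    show False using zero_col[OF fcx n3 iC iA] pq c1 c2 by linarith
  qed
  obtain p q where c1p: "c1 = - 2 * int p" and c2q: "c2 = - 2 * int q"
    using hom_elt_nonzero[OF h_nz hhom[OF mAl(1) mAl(1)]] by auto
  have h_mono: "h (Al n) (Al n) = mono p q"
    using hom_elt_single[of "h (Al n) (Al n)" p q] hhom[OF mAl(1) mAl(1)] h_nz c1p c2q by simp
  have p_lt: "p < n - 1" using c1 c1p n3 by linarith
  have h_off: "h (Al n) (Al (n-1)) = 0"
  proof (rule ccontr)
    assume nz: "h (Al n) (Al (n-1)) \<noteq> 0"
    obtain p' q' where "fst (gr (Al (n-1))) + c1 - fst (gr (Al n)) = - 2 * int p'"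
      using hom_elt_nonzero[OF nz hhom[OF mAl(1) mAl(2)]] by blast
    then show False using L2(2)[OF fcx n3] c1 by linarith
  qed

  define K where "K = n*(n+1) div 2 - (n-1)"
  have K_gt: "p < K" using p_lt NM[OF n3] unfolding K_def by auto
  obtain z where zU: "z \<in> Uvec (bas D)" and zc: "\<forall>i. Uapp (bas D) (dmat D) z i = 0"
    and P2: "\<forall>y\<in>Uvec (bas D). (\<forall>i. Uapp (bas D) (dmat D) y i = 0) \<longrightarrow>
          (\<exists>p. \<exists>w\<in>Uvec (bas D). (\<lambda>i. y i - p * z i) = Uapp (bas D) (dmat D) w)"
    and P3: "\<forall>p. (\<exists>w\<in>Uvec (bas D). (\<lambda>i. p * z i) = Uapp (bas D) (dmat D) w) \<longrightarrow> p = 0"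
    using assms(4) unfolding knotlike_def by blast
  define yU where "yU = Uapp (Cbas n) F (tvec n)"
  have yUv: "yU \<in> Uvec (bas D)" unfolding Uvec_def yU_def Uapp_def using Fz by simp
  have cyU: "\<forall>i. Uapp (bas D) (dmat D) yU i = 0"
    unfolding yU_def Uapp_comp chF' Uapp_comp[symmetric] t_cycle[OF fcx n3] Uapp_zero by simp
  obtain p0 w where wU: "w \<in> Uvec (bas D)" and yw: "(\<lambda>i. yU i - p0 * z i) = Uapp (bas D) (dmat D) w"
    using P2 yUv cyU by blast
  define e' where "e' = Uapp (Cbas n) F (\<lambda>k. if k = Bz (n-1) then 1 else 0)"
  have e'U: "e' \<in> Uvec (bas D)" unfolding Uvec_def e'_def Uapp_def using Fz by simp
  have de': "Uapp (bas D) (dmat D) e' = (\<lambda>i. monom 1 K * yU i)"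
    unfolding e'_def Uapp_comp chF' Uapp_comp[symmetric] e_bd[OF fcx n3] Uapp_smult yU_def K_def ..
  define v' where "v' = (\<lambda>k. e' k - monom 1 K * w k)"
  have v'U: "v' \<in> Uvec (bas D)" using e'U wU unfolding Uvec_def v'_def by simp
  have "Uapp (bas D) (dmat D) v' = (\<lambda>i. (monom 1 K * p0) * z i)"
  proof -
    have "Uapp (bas D) (dmat D) v' = (\<lambda>i. monom 1 K * yU i - monom 1 K * Uapp (bas D) (dmat D) w i)"
      unfolding v'_def Uapp_diff de' Uapp_smult ..
    also have "\<dots> = (\<lambda>i. monom 1 K * yU i - monom 1 K * (yU i - p0 * z i))"
      unfolding yw[symmetric] ..
    also have "\<dots> = (\<lambda>i. (monom 1 K * p0) * z i)" by (simp add: algebra_simps)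
    finally show ?thesis .
  qed
  then have "monom 1 K * p0 = 0" using P3 v'U by metis
  then have p00: "p0 = 0" by simp
  then have yUb: "yU = Uapp (bas D) (dmat D) w" using yw by simp
  have "Uapp (bas D) G yU = Uapp (Cbas n) (Cdif n) (Uapp (bas D) G w)"
    unfolding yUb Uapp_comp chG' ..
  moreover have "Uapp (bas D) G yU = Uapp (Cbas n) h (tvec n)"
    unfolding yU_def Uapp_comp h_def ..
  ultimately have eqA: "Uapp (Cbas n) h (tvec n) (Al n) = Uapp (Cbas n) (Cdif n) (Uapp (bas D) G w) (Al n)"
    by simp
  have lhs: "Uapp (Cbas n) h (tvec n) (Al n) = monom 1 p"
  proof -
    have "Uapp (Cbas n) h (tvec n) (Al n) = poly (h (Al n) (Al n)) 1 * tvec n (Al n)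
            + poly (h (Al n) (Al (n-1))) 1 * tvec n (Al (n-1))"
      unfolding Uapp_def by (rule sum_two[OF finC mAl]) (simp add: tvec_def)
    then show ?thesis using h_mono h_off mAl(3) by (simp add: tvec_def poly_mono1)
  qed
  have "monom 1 K dvd Uapp (Cbas n) (Cdif n) (Uapp (bas D) G w) (Al n)"
    unfolding Uapp_def K_def by (rule dvd_sum) (use row_dvd[OF fcx n3] in auto)
  then have "monom 1 K dvd (monom 1 p :: bit poly)" using eqA lhs by simp
  then have "degree (monom (1::bit) K) \<le> degree (monom (1::bit) p)"
    by (rule dvd_imp_degree_le) simp
  then show False using K_gt by (simp add: degree_monom_eq)
qed


end
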